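(* Let $d\in\mathbb N$, $\alpha\in\mathbb R_+^d$, and let $D\subset\mathbb R_+^d$ be a nonempty convex compact set. Then $$\inf_{x\in[0,1]^d}\max_{y\in D}\frac{y^\top x}{\alpha^\top x}=\max_{y\in D}\min_{i\in[d]}\frac{y_i}{\alpha_i}.$$ Moreover, the same equality holds with $\inf_{x\in[0,1]^d}$ replaced by $\inf_{x\in\mathbb R_+^d}$.
   Context: Every ratio whose denominator equals zero is defined to be $+\infty$; this applies both to $\frac{y^\top x}{\alpha^\top x}$ when $\alpha^\top x=0$ and to $\frac{y_i}{\alpha_i}$ when $\alpha_i=0$. *)

theory Defs
  imports "HOL-Analysis.Analysis" "HOL-Library.Extended_Real"
begin

definition eratio :: "real \<Rightarrow> real \<Rightarrow> ereal" where
  "eratio a b = (if b = 0 then \<infinity> else ereal (a / b))"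

end

theory Submission
  imports Defs
begin

lemma inner_real_vec: "(x::real^'n) \<bullet> y = (\<Sum>i\<in>UNIV. x$i * y$i)"
  by (simp add: inner_vec_def)

lemma weak:
  fixes alpha x y :: "real ^ 'n"
  assumes a: "\<forall>i. 0 \<le> alpha $ i" and x: "\<forall>i. 0 \<le> x $ i" and y: "\<forall>i. 0 \<le> y $ i"
  shows "Min ((\<lambda>i. eratio (y $ i) (alpha $ i)) ` UNIV) \<le> eratio (y \<bullet> x) (alpha \<bullet> x)"
proof (cases "alpha \<bullet> x = 0")
  case True then show ?thesis by (simp add: eratio_def)
next
  case False
  have nn: "0 \<le> alpha \<bullet> x" unfolding inner_real_vec using a x by (simp add: sum_nonneg)
  with False have pos: "0 < alpha \<bullet> x" by simp
  obtain i where "alpha $ i * x $ i \<noteq> 0"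
    using False unfolding inner_real_vec by (meson sum.neutral)
  then have ai: "0 < alpha $ i" using a by (metis less_eq_real_def mult_zero_left)
  define m where "m = Min ((\<lambda>i. eratio (y $ i) (alpha $ i)) ` UNIV)"
  have mle: "\<And>j. m \<le> eratio (y $ j) (alpha $ j)" unfolding m_def by (intro Min_le) auto
  have "m \<in> (\<lambda>i. eratio (y $ i) (alpha $ i)) ` UNIV" unfolding m_def by (intro Min_in) auto
  then obtain k where mk: "m = eratio (y $ k) (alpha $ k)" by auto
  have "m \<le> ereal (y$i / alpha$i)" using mle[of i] ai by (simp add: eratio_def)
  then have "m \<noteq> \<infinity>" by auto
  with mk obtain r where mr: "m = ereal r" by (auto simp: eratio_def split: if_splits)
  have rj: "r * alpha $ j \<le> y $ j" for j
  proof (cases "alpha $ j = 0")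
    case True then show ?thesis using y by simp
  next
    case False
    then have "0 < alpha $ j" using a by (simp add: less_le)
    moreover have "r \<le> y $ j / alpha $ j" using mle[of j] False mr by (simp add: eratio_def)
    ultimately show ?thesis by (simp add: field_simps)
  qed
  have "r * (alpha \<bullet> x) = (\<Sum>j\<in>UNIV. (r * alpha $ j) * x $ j)"
    unfolding inner_real_vec by (simp add: sum_distrib_left mult.assoc)
  also have "\<dots> \<le> (\<Sum>j\<in>UNIV. y $ j * x $ j)"
    by (intro sum_mono mult_right_mono rj) (use x in auto)
  also have "\<dots> = y \<bullet> x" by (simp add: inner_real_vec)
  finally have "r \<le> (y \<bullet> x) / (alpha \<bullet> x)" using pos by (simp add: field_simps)
  then show ?thesis using False mr m_def by (simp add: eratio_def)
qed

lemma strong: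
  fixes alpha :: "real ^ 'n" and D :: "(real ^ 'n) set" and c0 :: real
  assumes a: "\<forall>i. 0 \<le> alpha $ i"
    and "D \<noteq> {}" and "convex D"
    and yD: "\<forall>y\<in>D. Min ((\<lambda>i. eratio (y $ i) (alpha $ i)) ` UNIV) \<le> ereal c0"
  shows "\<exists>x. (\<forall>i. 0 \<le> x $ i \<and> x $ i \<le> 1) \<and> (\<forall>y\<in>D. eratio (y \<bullet> x) (alpha \<bullet> x) \<le> ereal c0)"
proof -
  define C where "C = {z::real^'n. \<forall>i. 0 < alpha$i \<longrightarrow> c0 * alpha$i < z$i}"
  define z0 where "z0 = ((\<chi> j. c0 * alpha$j + 1) :: real^'n)"
  have z0C: "z0 \<in> C" unfolding C_def z0_def by simp
  have cC: "convex C" unfolding convex_def C_def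
  proof (intro allI impI ballI, clarsimp)
    fix z w :: "real^'n" and u v :: real and i
    assume z: "\<forall>i. 0 < alpha $ i \<longrightarrow> c0 * alpha $ i < z $ i" and w: "\<forall>i. 0 < alpha $ i \<longrightarrow> c0 * alpha $ i < w $ i"
      and u: "0 \<le> u" and v: "0 \<le> v" and uv: "u + v = 1" and ai: "0 < alpha $ i"
    have "u * (c0 * alpha $ i) \<le> u * z $ i" using z ai u by (intro mult_left_mono) auto
    moreover have "v * (c0 * alpha $ i) \<le> v * w $ i" using w ai v by (intro mult_left_mono) auto
    moreover have "u * (c0 * alpha $ i) < u * z $ i \<or> v * (c0 * alpha $ i) < v * w $ i"
      using uv u v z w ai by (cases "u > 0") auto
    ultimately have "u * (c0 * alpha $ i) + v * (c0 * alpha $ i) < u * z $ i + v * w $ i" by linarith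
    then show "c0 * alpha $ i < u * z $ i + v * w $ i" using uv by (simp add: algebra_simps)
        (metis distrib_left mult.commute mult_1)
  qed
  have disj: "D \<inter> C = {}"
  proof (rule ccontr)
    assume "D \<inter> C \<noteq> {}"
    then obtain y where y: "y \<in> D" "y \<in> C" by auto
    have "ereal c0 < Min ((\<lambda>i. eratio (y $ i) (alpha $ i)) ` UNIV)"
    proof (subst Min_gr_iff, simp, simp, clarsimp)
      fix i
      show "ereal c0 < eratio (y $ i) (alpha $ i)"
      proof (cases "alpha $ i = 0")
        case True then show ?thesis by (simp add: eratio_def)
      next
        case False
        then have "0 < alpha $ i" using a by (simp add: less_le)
        then show ?thesis using y(2) False unfolding C_def by (simp add: eratio_def field_simps)
      qed
    qed
    moreover have "Min ((\<lambda>i. eratio (y $ i) (alpha $ i)) ` UNIV) \<le> ereal c0" using yD y(1) by blast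
    ultimately show False by (meson not_le)
  qed
  obtain w b where wb: "w \<noteq> 0" "\<forall>x\<in>D. w \<bullet> x \<le> b" "\<forall>x\<in>C. b \<le> w \<bullet> x"
    using separating_hyperplane_sets[OF assms(3) cC assms(2)] z0C disj by blast
  define K where "K = w \<bullet> z0 - b"
  have K: "0 \<le> K" using wb(3) z0C unfolding K_def by auto
  have wsign: "0 \<le> w $ i \<and> (alpha $ i = 0 \<longrightarrow> w $ i = 0)" for i
  proof (rule ccontr)
    assume "\<not> ?thesis"
    then have bad: "w $ i < 0 \<or> (alpha $ i = 0 \<and> w $ i > 0)" by auto
    define t where "t = - (K + 1) / w $ i"
    have wi: "w $ i \<noteq> 0" using bad by auto
    have "z0 + t *\<^sub>R axis i 1 \<in> C"
    proof -
      have "0 < alpha $ i \<Longrightarrow> 0 \<le> t" using bad K unfolding t_def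
        by (auto simp: divide_nonpos_neg)
      then show ?thesis unfolding C_def z0_def
        by (auto simp: axis_def)
    qed
    then have "b \<le> w \<bullet> (z0 + t *\<^sub>R axis i 1)" using wb(3) by auto
    also have "\<dots> = w \<bullet> z0 + t * w $ i" by (simp add: inner_add_right inner_axis)
    also have "\<dots> = b - 1" using wi unfolding t_def K_def by simp
    finally show False by simp
  qed
  define S where "S = (\<Sum>j\<in>UNIV. w $ j)"
  have S: "0 \<le> S" unfolding S_def using wsign by (simp add: sum_nonneg)
  have ble: "b \<le> c0 * (w \<bullet> alpha)"
  proof (rule field_le_epsilon)
    fix e :: real assume e: "0 < e"
    define t where "t = e / (S + 1)"
    have t: "0 < t" using e S unfolding t_def by simp
    define zt where "zt = ((\<chi> j. c0 * alpha$j + t) :: real^'n)"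
    have "zt \<in> C" unfolding C_def zt_def using t by simp
    then have "b \<le> w \<bullet> zt" using wb(3) by auto
    also have "\<dots> = c0 * (w \<bullet> alpha) + t * S"
      unfolding zt_def S_def inner_real_vec by (simp add: algebra_simps sum.distrib sum_distrib_left)
    also have "t * S \<le> e" unfolding t_def using S e by (simp add: field_simps)
    finally show "b \<le> c0 * (w \<bullet> alpha) + e" by simp
  qed
  obtain i where wi: "w $ i \<noteq> 0" using wb(1) by (metis vec_eq_iff zero_index)
  then have wipos: "0 < w $ i" "0 < alpha $ i" using wsign[of i] a[rule_format, of i]
    by (auto simp: less_le)
  have wa: "0 < w \<bullet> alpha"
  proof -
    have "0 < w $ i * alpha $ i" using wipos by simp
    also have "\<dots> \<le> (\<Sum>j\<in>UNIV. w $ j * alpha $ j)"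
      by (rule member_le_sum) (use wsign a in auto)
    finally show ?thesis by (simp add: inner_real_vec)
  qed
  define x where "x = (1 / (1 + norm w)) *\<^sub>R w"
  have np: "0 < 1 + norm w" by (simp add: add_pos_nonneg)
  have xbox: "\<forall>i. 0 \<le> x $ i \<and> x $ i \<le> 1"
  proof
    fix j
    have "w $ j \<le> norm w" using component_le_norm_cart[of w j] by simp
    then show "0 \<le> x $ j \<and> x $ j \<le> 1" unfolding x_def using wsign[of j] np
      by (simp add: field_simps)
  qed
  have "\<forall>y\<in>D. eratio (y \<bullet> x) (alpha \<bullet> x) \<le> ereal c0"
  proof
    fix y assume y: "y \<in> D"
    have ax: "alpha \<bullet> x = (w \<bullet> alpha) / (1 + norm w)" unfolding x_def by (simp add: inner_commute)
    have yx: "y \<bullet> x = (w \<bullet> y) / (1 + norm w)" unfolding x_def by (simp add: inner_commute)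
    have "w \<bullet> y \<le> c0 * (w \<bullet> alpha)" using wb(2) y ble by force
    then have "(w \<bullet> y) / (w \<bullet> alpha) \<le> c0" using wa by (simp add: field_simps)
    then show "eratio (y \<bullet> x) (alpha \<bullet> x) \<le> ereal c0" using wa np
      unfolding ax yx eratio_def by simp
  qed
  with xbox show ?thesis by blast
qed

theorem mainTheorem4:
  fixes alpha :: "real ^ 'n" and D :: "(real ^ 'n) set"
  assumes "\<forall>i. 0 \<le> alpha $ i"
    and "D \<noteq> {}" and "convex D" and "compact D"
    and "\<forall>y\<in>D. \<forall>i. 0 \<le> y $ i"
  shows "((INF x\<in>{x. \<forall>i. 0 \<le> x $ i \<and> x $ i \<le> 1}. SUP y\<in>D. eratio (y \<bullet> x) (alpha \<bullet> x))
           = (SUP y\<in>D. Min ((\<lambda>i. eratio (y $ i) (alpha $ i)) ` UNIV))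
         \<and> (INF x\<in>{x. \<forall>i. 0 \<le> x $ i}. SUP y\<in>D. eratio (y \<bullet> x) (alpha \<bullet> x))
           = (SUP y\<in>D. Min ((\<lambda>i. eratio (y $ i) (alpha $ i)) ` UNIV)))"
proof -
  define c where "c = (SUP y\<in>D. Min ((\<lambda>i. eratio (y $ i) (alpha $ i)) ` UNIV))"
  define F where "F = (\<lambda>x. SUP y\<in>D. eratio (y \<bullet> x) (alpha \<bullet> x))"
  define B where "B = {x::real^'n. \<forall>i. 0 \<le> x $ i \<and> x $ i \<le> 1}"
  define P where "P = {x::real^'n. \<forall>i. 0 \<le> x $ i}"
  have lowP: "c \<le> F x" if "x \<in> P" for x
    unfolding c_def F_def
  proof (rule SUP_least)
    fix y assume y: "y \<in> D"
    have "Min ((\<lambda>i. eratio (y $ i) (alpha $ i)) ` UNIV) \<le> eratio (y \<bullet> x) (alpha \<bullet> x)"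
      using weak[of alpha x y] assms(1,5) y that unfolding P_def by auto
    also have "\<dots> \<le> (SUP y\<in>D. eratio (y \<bullet> x) (alpha \<bullet> x))" using y by (rule SUP_upper)
    finally show "Min ((\<lambda>i. eratio (y $ i) (alpha $ i)) ` UNIV) \<le> (SUP y\<in>D. eratio (y \<bullet> x) (alpha \<bullet> x))" .
  qed
  have BP: "B \<subseteq> P" unfolding B_def P_def by auto
  have up: "\<exists>x\<in>B. F x \<le> c" if cinf: "c \<noteq> \<infinity>"
  proof -
    obtain y0 where y0: "y0 \<in> D" using assms(2) by auto
    have "0 \<le> Min ((\<lambda>i. eratio (y0 $ i) (alpha $ i)) ` UNIV)"
      proof (subst Min_ge_iff, simp, simp, rule ballI)
      fix v assume "v \<in> range (\<lambda>i. eratio (y0 $ i) (alpha $ i))"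
      then obtain i where "v = eratio (y0 $ i) (alpha $ i)" by blast
      moreover have "0 \<le> y0 $ i" "0 \<le> alpha $ i" using assms(1,5) y0 by auto
      ultimately show "0 \<le> v" by (simp add: eratio_def)
    qed
    also have "\<dots> \<le> c" unfolding c_def using y0 by (rule SUP_upper)
    finally have "0 \<le> c" .
    with cinf obtain c0 where c0: "c = ereal c0" by (cases c) auto
    have "\<forall>y\<in>D. Min ((\<lambda>i. eratio (y $ i) (alpha $ i)) ` UNIV) \<le> ereal c0"
    proof
      fix y assume "y \<in> D"
      then have "Min ((\<lambda>i. eratio (y $ i) (alpha $ i)) ` UNIV) \<le> c" unfolding c_def by (rule SUP_upper)
      then show "Min ((\<lambda>i. eratio (y $ i) (alpha $ i)) ` UNIV) \<le> ereal c0" using c0 by simp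
    qed
    from strong[OF assms(1,2,3) this] obtain x where
      x: "\<forall>i. 0 \<le> x $ i \<and> x $ i \<le> 1" "\<forall>y\<in>D. eratio (y \<bullet> x) (alpha \<bullet> x) \<le> ereal c0" by blast
    have "F x \<le> c" unfolding F_def c0 using x(2) by (intro SUP_least) blast
    with x(1) show ?thesis unfolding B_def by blast
  qed
  have lB: "c \<le> (INF x\<in>B. F x)" using lowP BP by (intro INF_greatest) blast
  have lP: "c \<le> (INF x\<in>P. F x)" using lowP by (intro INF_greatest) blast
  have "(INF x\<in>B. F x) = c \<and> (INF x\<in>P. F x) = c"
  proof (cases "c = \<infinity>")
    case True
    have "(INF x\<in>B. F x) = c" using True lB by (simp add: top_unique)
    moreover have "(INF x\<in>P. F x) = c" using True lP by (simp add: top_unique)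
    ultimately show ?thesis by simp
  next
    case False
    then obtain x where x: "x \<in> B" "F x \<le> c" using up by blast
    have "(INF x\<in>B. F x) \<le> c" using x by (meson INF_lower2)
    moreover have "(INF x\<in>P. F x) \<le> c" using x BP by (meson INF_lower2 subsetD)
    moreover have "c \<le> (INF x\<in>B. F x)" using lowP BP by (intro INF_greatest) blast
    moreover have "c \<le> (INF x\<in>P. F x)" using lowP by (intro INF_greatest) blast
    ultimately show ?thesis by auto
  qed
  then show ?thesis unfolding B_def P_def F_def c_def by simp
qed

end
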